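(* Let $T,Q,R$ be pairwise compatible tilings. Then $R$ is compatible with $T\cap Q$ and with $T\cup Q$, and $R\cap(T\cup Q)=(R\cap T)\cup(R\cap Q)$.
   Context: Fix an integer $n\ge 3$ and write $[n]=\{1,\dots,n\}$. Let $\Lambda$ be the set of 3-element subsets of $[n]$; a triple $\{i,j,k\}$ with $i<j<k$ is written $ijk$. For a 4-element subset $F=\{i<j<k<l\}$ of $[n]$, the stick of $F$ is the sequence $(ijk,\ ijl,\ ikl,\ jkl)$. A tiling (the inversion set of a rhombus tiling of the zonogon $Z(n;2)$) is a subset $T\subseteq\Lambda$ such that for every 4-element $F\subseteq[n]$, $T\cap\mathrm{stick}(F)$ is an initial segment or a final segment of the stick (empty set and whole stick allowed). Two tilings $T,T'$ are compatible if both $T\cap T'$ and $T\cup T'$ are tilings. *)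

theory Defs
  imports Main
begin

definition triples :: "nat \<Rightarrow> nat set set" where
  "triples n = {A. A \<subseteq> {1..n} \<and> card A = 3}"

text \<open>Stick of a 4-element set F = {i<j<k<l}: the list (ijk, ijl, ikl, jkl).\<close>
definition stick :: "nat set \<Rightarrow> nat set list" where
  "stick F = (let xs = sorted_list_of_set F in
     [F - {xs ! 3}, F - {xs ! 2}, F - {xs ! 1}, F - {xs ! 0}])"

definition is_tiling :: "nat \<Rightarrow> nat set set \<Rightarrow> bool" where
  "is_tiling n T \<longleftrightarrow> T \<subseteq> triples n \<and>
     (\<forall>F. F \<subseteq> {1..n} \<and> card F = 4 \<longrightarrow>
        (\<exists>m\<le>4. T \<inter> set (stick F) = set (take m (stick F))
               \<or> T \<inter> set (stick F) = set (drop m (stick F))))"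

definition compatible :: "nat \<Rightarrow> nat set set \<Rightarrow> nat set set \<Rightarrow> bool" where
  "compatible n T T' \<longleftrightarrow> is_tiling n (T \<inter> T') \<and> is_tiling n (T \<union> T')"

end

theory Submission
  imports Defs
begin

definition good4 :: "bool \<Rightarrow> bool \<Rightarrow> bool \<Rightarrow> bool \<Rightarrow> bool" where
 "good4 a b c d \<longleftrightarrow> ((b \<longrightarrow> a) \<and> (c \<longrightarrow> b) \<and> (d \<longrightarrow> c)) \<or> ((a \<longrightarrow> b) \<and> (b \<longrightarrow> c) \<and> (c \<longrightarrow> d))"

lemma ex_le4: "(\<exists>m\<le>(4::nat). P m) \<longleftrightarrow> P 0 \<or> P 1 \<or> P 2 \<or> P 3 \<or> P 4"
  by (auto simp: le_Suc_eq numeral_eq_Suc)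

lemma len4: "length xs = 4 \<Longrightarrow> \<exists>a b c d. xs = [a,b,c,d]"
  by (auto simp: numeral_eq_Suc length_Suc_conv)

lemma mem_take: "distinct s \<Longrightarrow> i < length s \<Longrightarrow> s!i \<in> set (take m s) \<longleftrightarrow> i < m"
  by (auto simp: in_set_conv_nth nth_eq_iff_index_eq)

lemma mem_drop: "distinct s \<Longrightarrow> i < length s \<Longrightarrow> s!i \<in> set (drop m s) \<longleftrightarrow> m \<le> i"
  apply (auto simp: in_set_conv_nth nth_eq_iff_index_eq)
  apply (rule exI[of _ "i - m"])
  apply auto
  done

lemma seg_char:
  assumes "distinct s" "S \<subseteq> set s" "\<And>i. i < length s \<Longrightarrow> s!i \<in> S \<longleftrightarrow> Q i"
  shows "X \<inter> set s = S \<longleftrightarrow> (\<forall>i<length s. s!i \<in> X \<longleftrightarrow> Q i)"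
proof
  assume h: "X \<inter> set s = S"
  show "\<forall>i<length s. s!i \<in> X \<longleftrightarrow> Q i"
  proof (intro allI impI)
    fix i assume i: "i < length s"
    have "s!i \<in> set s" using i by simp
    then show "s!i \<in> X \<longleftrightarrow> Q i" using assms(3)[OF i] h by blast
  qed
next
  assume h: "\<forall>i<length s. s!i \<in> X \<longleftrightarrow> Q i"
  show "X \<inter> set s = S"
  proof (rule set_eqI)
    fix x
    show "x \<in> X \<inter> set s \<longleftrightarrow> x \<in> S"
    proof (cases "x \<in> set s")
      case True
      then obtain i where i: "i < length s" "x = s!i" by (auto simp: in_set_conv_nth)
      then show ?thesis using h assms(3)[OF i(1)] by auto
    next
      case False then show ?thesis using assms(2) by auto
    qed
  qed
qed

lemma all_less4: "(\<forall>i<(4::nat). Q i) \<longleftrightarrow> Q 0 \<and> Q 1 \<and> Q 2 \<and> Q 3"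
  by (auto simp: less_Suc_eq numeral_eq_Suc)

lemma good_iff:
  assumes "distinct s" "length s = 4"
  shows "(\<exists>m\<le>4. X \<inter> set s = set (take m s) \<or> X \<inter> set s = set (drop m s))
     \<longleftrightarrow> good4 (s!0 \<in> X) (s!1 \<in> X) (s!2 \<in> X) (s!3 \<in> X)"
proof -
  have t: "X \<inter> set s = set (take m s) \<longleftrightarrow> (\<forall>i<4. s!i \<in> X \<longleftrightarrow> i < m)" for m
    using seg_char[OF assms(1), of "set (take m s)" "\<lambda>i. i < m" X] mem_take[OF assms(1)] assms(2)
    by (simp add: set_take_subset)
  have d: "X \<inter> set s = set (drop m s) \<longleftrightarrow> (\<forall>i<4. s!i \<in> X \<longleftrightarrow> m \<le> i)" for m
    using seg_char[OF assms(1), of "set (drop m s)" "\<lambda>i. m \<le> i" X] mem_drop[OF assms(1)] assms(2)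
    by (simp add: set_drop_subset)
  show ?thesis unfolding t d ex_le4 all_less4 good4_def by auto
qed

lemma g4: "good4 x y z w \<Longrightarrow> (\<not>x \<and> \<not>y \<and> \<not>z \<and> \<not>w) \<or> (x \<and> \<not>y \<and> \<not>z \<and> \<not>w) \<or> (x \<and> y \<and> \<not>z \<and> \<not>w) \<or> (x \<and> y \<and> z \<and> \<not>w) \<or> (x \<and> y \<and> z \<and> w) \<or> (\<not>x \<and> \<not>y \<and> \<not>z \<and> w) \<or> (\<not>x \<and> \<not>y \<and> z \<and> w) \<or> (\<not>x \<and> y \<and> z \<and> w)"
  unfolding good4_def by blast

lemma comb0:
  assumes "good4 a0 a1 a2 a3" "good4 b0 b1 b2 b3" "good4 c0 c1 c2 c3"
  shows "good4 (a0\<and>b0) (a1\<and>b1) (a2\<and>b2) (a3\<and>b3) \<and> good4 (a0\<or>b0) (a1\<or>b1) (a2\<or>b2) (a3\<or>b3) \<and> good4 (a0\<and>c0) (a1\<and>c1) (a2\<and>c2) (a3\<and>c3) \<and> good4 (a0\<or>c0) (a1\<or>c1) (a2\<or>c2) (a3\<or>c3) \<and> good4 (b0\<and>c0) (b1\<and>c1) (b2\<and>c2) (b3\<and>c3) \<and> good4 (b0\<or>c0) (b1\<or>c1) (b2\<or>c2) (b3\<or>c3) \<longrightarrow> good4 (c0\<and>a0\<and>b0) (c1\<and>a1\<and>b1) (c2\<and>a2\<and>b2) (c3\<and>a3\<and>b3) \<and> good4 (c0\<or>a0\<and>b0) (c1\<or>a1\<and>b1) (c2\<or>a2\<and>b2)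 (c3\<or>a3\<and>b3) \<and> good4 (c0\<and>(a0\<or>b0)) (c1\<and>(a1\<or>b1)) (c2\<and>(a2\<or>b2)) (c3\<and>(a3\<or>b3)) \<and> good4 (c0\<or>a0\<or>b0) (c1\<or>a1\<or>b1) (c2\<or>a2\<or>b2) (c3\<or>a3\<or>b3)"
  using g4[OF assms(1)] g4[OF assms(2)] g4[OF assms(3)]
  by (elim disjE conjE; simp add: good4_def)

lemma comb:
  "good4 a0 a1 a2 a3 \<Longrightarrow> good4 b0 b1 b2 b3 \<Longrightarrow> good4 c0 c1 c2 c3 \<Longrightarrow>
   good4 (a0\<and>b0) (a1\<and>b1) (a2\<and>b2) (a3\<and>b3) \<Longrightarrow>
   good4 (a0\<or>b0) (a1\<or>b1) (a2\<or>b2) (a3\<or>b3) \<Longrightarrow>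
   good4 (a0\<and>c0) (a1\<and>c1) (a2\<and>c2) (a3\<and>c3) \<Longrightarrow>
   good4 (a0\<or>c0) (a1\<or>c1) (a2\<or>c2) (a3\<or>c3) \<Longrightarrow>
   good4 (b0\<and>c0) (b1\<and>c1) (b2\<and>c2) (b3\<and>c3) \<Longrightarrow>
   good4 (b0\<or>c0) (b1\<or>c1) (b2\<or>c2) (b3\<or>c3) \<Longrightarrow> good4 (c0\<and>a0\<and>b0) (c1\<and>a1\<and>b1) (c2\<and>a2\<and>b2) (c3\<and>a3\<and>b3) \<and>
   good4 (c0\<or>a0\<and>b0) (c1\<or>a1\<and>b1) (c2\<or>a2\<and>b2) (c3\<or>a3\<and>b3) \<and>
   good4 (c0\<and>(a0\<or>b0)) (c1\<and>(a1\<or>b1)) (c2\<and>(a2\<or>b2)) (c3\<and>(a3\<or>b3)) \<and>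
   good4 (c0\<or>a0\<or>b0) (c1\<or>a1\<or>b1) (c2\<or>a2\<or>b2) (c3\<or>a3\<or>b3)"
  using comb0 by blast

lemma stick_distinct:
  assumes "finite F" "card F = 4"
  shows "distinct (stick F) \<and> length (stick F) = 4"
proof -
  define xs where "xs = sorted_list_of_set F"
  have d: "distinct xs" "length xs = 4" "set xs = F" using assms by (auto simp: xs_def)
  obtain a b c d where s: "xs = [a,b,c,d]" using d(2)
    using len4 by blast
  have F: "set [d,c,b,a] \<subseteq> F" using d(3) s by auto
  have dd: "distinct [d,c,b,a]" using d(1) s by auto
  have inj: "inj_on (\<lambda>x. F - {x}) F" unfolding inj_on_def by blast
  have e: "stick F = map (\<lambda>x. F - {x}) [d,c,b,a]"
    unfolding stick_def xs_def[symmetric] s by simp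
  show ?thesis unfolding e using dd distinct_map inj_on_subset[OF inj F] by auto
qed

lemma good_set:
  assumes "card F = 4"
  shows "(\<exists>m\<le>4. X \<inter> set (stick F) = set (take m (stick F)) \<or> X \<inter> set (stick F) = set (drop m (stick F)))
     \<longleftrightarrow> good4 (stick F!0 \<in> X) (stick F!1 \<in> X) (stick F!2 \<in> X) (stick F!3 \<in> X)"
proof -
  have "finite F" using assms by (metis card.infinite zero_neq_numeral)
  then show ?thesis using good_iff stick_distinct assms by blast
qed

lemma tiling_good:
  "is_tiling n X \<Longrightarrow> F \<subseteq> {1..n} \<Longrightarrow> card F = 4 \<Longrightarrow>
   good4 (stick F!0 \<in> X) (stick F!1 \<in> X) (stick F!2 \<in> X) (stick F!3 \<in> X)"
  unfolding is_tiling_def using good_set by blast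

lemma good_tiling:
  "X \<subseteq> triples n \<Longrightarrow> (\<And>F. F \<subseteq> {1..n} \<Longrightarrow> card F = 4 \<Longrightarrow>
   good4 (stick F!0 \<in> X) (stick F!1 \<in> X) (stick F!2 \<in> X) (stick F!3 \<in> X)) \<Longrightarrow> is_tiling n X"
  unfolding is_tiling_def using good_set by blast

theorem lemma1:
  fixes n :: nat and T Q R :: "nat set set"
  assumes "n \<ge> 3"
    and "is_tiling n T" and "is_tiling n Q" and "is_tiling n R"
    and "compatible n T Q" and "compatible n T R" and "compatible n Q R"
  shows "compatible n R (T \<inter> Q) \<and> compatible n R (T \<union> Q)
         \<and> R \<inter> (T \<union> Q) = (R \<inter> T) \<union> (R \<inter> Q)"
proof -
  have tT: "T \<subseteq> triples n" and tQ: "Q \<subseteq> triples n" and tR: "R \<subseteq> triples n"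
    using assms(2-4) unfolding is_tiling_def by auto
  have key: "good4 (stick F!0 \<in> R \<inter> (T \<inter> Q)) (stick F!1 \<in> R \<inter> (T \<inter> Q)) (stick F!2 \<in> R \<inter> (T \<inter> Q)) (stick F!3 \<in> R \<inter> (T \<inter> Q)) \<and>
     good4 (stick F!0 \<in> R \<union> (T \<inter> Q)) (stick F!1 \<in> R \<union> (T \<inter> Q)) (stick F!2 \<in> R \<union> (T \<inter> Q)) (stick F!3 \<in> R \<union> (T \<inter> Q)) \<and>
     good4 (stick F!0 \<in> R \<inter> (T \<union> Q)) (stick F!1 \<in> R \<inter> (T \<union> Q)) (stick F!2 \<in> R \<inter> (T \<union> Q)) (stick F!3 \<in> R \<inter> (T \<union> Q)) \<and>
     good4 (stick F!0 \<in> R \<union> (T \<union> Q)) (stick F!1 \<in> R \<union> (T \<union> Q)) (stick F!2 \<in> R \<union> (T \<union> Q)) (stick F!3 \<in> R \<union> (T \<union> Q))"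
    if F: "F \<subseteq> {1..n}" "card F = 4" for F
  proof -
    have h: "is_tiling n (T \<inter> Q)" "is_tiling n (T \<union> Q)" "is_tiling n (T \<inter> R)" "is_tiling n (T \<union> R)"
      "is_tiling n (Q \<inter> R)" "is_tiling n (Q \<union> R)"
      using assms(5-7) unfolding compatible_def by auto
    note g = tiling_good[OF assms(2) F] tiling_good[OF assms(3) F] tiling_good[OF assms(4) F]
      tiling_good[OF h(1) F] tiling_good[OF h(2) F] tiling_good[OF h(3) F]
      tiling_good[OF h(4) F] tiling_good[OF h(5) F] tiling_good[OF h(6) F]
    show ?thesis using comb[OF g[unfolded Int_iff Un_iff]] unfolding Int_iff Un_iff .
  qed
  have "is_tiling n (R \<inter> (T \<inter> Q))" by (rule good_tiling) (use tR key in auto)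
  moreover have "is_tiling n (R \<union> (T \<inter> Q))" by (rule good_tiling) (use tR tT key in auto)
  moreover have "is_tiling n (R \<inter> (T \<union> Q))" by (rule good_tiling) (use tR key in auto)
  moreover have "is_tiling n (R \<union> (T \<union> Q))" by (rule good_tiling) (use tR tT tQ key in auto)
  ultimately show ?thesis unfolding compatible_def by blast
qed

end
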